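(* Let $n\in\mathbb N$ and let $\alpha_n\subseteq\bigcup_{j=1}^n S_j$ be a constrained optimal set of $n$-points for $P$ with $\operatorname{card}(\alpha_n)=n$, say $\alpha_n=\{(a_j,b_j):1\le j\le n\}$ with $a_1<a_2<\cdots<a_n$. Then for every $1\le j\le n$, \[(a_j,b_j)=U_n^{-1}\Big(E\big(X : (X,0)\in M((a_j,b_j)\mid\alpha_n)\big)\Big),\] where $X$ is a random variable with distribution $P$ and $E(X: (X,0)\in M)$ denotes the conditional expectation of $X$ given that $(X,0)$ lies in the Voronoi region $M$. In particular every element of $\alpha_n$ lies on $S_n$.
   Context: $P$ is the Cantor distribution on $\mathbb R$: the unique Borel probability measure with $P=\frac12P\circ T_1^{-1}+\frac12 P\circ T_2^{-1}$, where $T_1(x)=\frac x3$, $T_2(x)=\frac x3+\frac23$; its support is the classical Cantor set in $[0,1]$. Points $x\in\mathbb R$ are identified with $(x,0)\in\mathbb R^2$. For $j\in\mathbb N$, the constraint $S_j=\{(x,y): -\frac1j\le x\le 1,\ y=x+\frac1j\}$. For a finite set $\alpha\subset\mathbb R^2$ the distortion is $V(P;\alpha)=\int\min_{(p,q)\in\alpha}\big((x-p)^2+q^2\big)\,dP(x)$. The $n$th constrained quantization error is $V_n=\inf\{V(P;\alpha):\alpha\subseteq\bigcup_{j=1}^nS_j,\ 1\le\operatorname{card}(\alpha)\le n\}$, and a constrained optimal set of $n$-points is a set $\alpha$ attaining this infimum. For finite $\alpha\subset\mathbb R^2$ and $a\in\alpha$, the Voronoi region $M(a\mid\alpha)$ is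 the set of points of $\mathbb R^2$ whose Euclidean distance to $a$ is minimal among the elements of $\alpha$. For $n\in\mathbb N$, $U_n:S_n\to[-\frac1n,2+\frac1n]$ is the bijection $U_n(x,x+\frac1n)=2x+\frac1n$, with inverse $U_n^{-1}(u)=\big(\frac12(u-\frac1n),\frac12(u-\frac1n)+\frac1n\big)$; $U_n(p)$ is the point where the line through $p$ perpendicular to $S_n$ meets the real axis. *)

theory Defs
  imports "HOL-Probability.Probability"
begin

definition T1 :: "real \<Rightarrow> real" where "T1 x = x / 3"
definition T2 :: "real \<Rightarrow> real" where "T2 x = x / 3 + 2 / 3"

definition is_cantor_dist :: "real measure \<Rightarrow> bool" where
  "is_cantor_dist P \<longleftrightarrow> prob_space P \<and> sets P = sets borel \<and>
     (\<forall>A \<in> sets borel. measure P A = measure P (T1 -` A) / 2 + measure P (T2 -` A) / 2)"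

definition S :: "nat \<Rightarrow> (real \<times> real) set" where
  "S j = {(x, y). - 1 / real j \<le> x \<and> x \<le> 1 \<and> y = x + 1 / real j}"

definition distortion :: "real measure \<Rightarrow> (real \<times> real) set \<Rightarrow> real" where
  "distortion P \<alpha> = (\<integral>x. Min ((\<lambda>(p, q). (x - p)^2 + q^2) ` \<alpha>) \<partial>P)"

definition admissible :: "nat \<Rightarrow> (real \<times> real) set \<Rightarrow> bool" where
  "admissible n \<alpha> \<longleftrightarrow> finite \<alpha> \<and> \<alpha> \<subseteq> (\<Union>j\<in>{1..n}. S j) \<and> 1 \<le> card \<alpha> \<and> card \<alpha> \<le> n"

definition constrained_error :: "real measure \<Rightarrow> nat \<Rightarrow> real" where
  "constrained_error P n = Inf {distortion P \<alpha> | \<alpha>. admissible n \<alpha>}"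

definition constrained_optimal :: "real measure \<Rightarrow> nat \<Rightarrow> (real \<times> real) set \<Rightarrow> bool" where
  "constrained_optimal P n \<alpha> \<longleftrightarrow> admissible n \<alpha> \<and> distortion P \<alpha> = constrained_error P n"

definition voronoi :: "(real \<times> real) \<Rightarrow> (real \<times> real) set \<Rightarrow> (real \<times> real) set" where
  "voronoi a \<alpha> = {z. \<forall>b\<in>\<alpha>. dist z a \<le> dist z b}"

definition cond_exp :: "real measure \<Rightarrow> real set \<Rightarrow> real" where
  "cond_exp P A = (LINT x:A|P. x) / measure P A"

definition U_inv :: "nat \<Rightarrow> real \<Rightarrow> real \<times> real" where
  "U_inv n u = ((u - 1 / real n) / 2, (u - 1 / real n) / 2 + 1 / real n)"

end

theory Submission
  imports Defs
begin


locale cantor = prob_space P for P :: "real measure" +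
  assumes sb: "sets P = sets borel"
  and eqn: "\<And>A. A \<in> sets borel \<Longrightarrow> measure P A = measure P (T1 -` A) / 2 + measure P (T2 -` A) / 2"
begin

lemma sp[simp]: "space P = UNIV"
  using sets_eq_imp_space_eq[OF sb] by simp

lemma meas_borel[measurable (raw)]: "A \<in> sets borel \<Longrightarrow> A \<in> sets P"
  using sb by simp

lemma upper_eq: assumes "r \<ge> 1" shows "measure P {r<..} = measure P {3*r<..}"
proof -
  have "T1 -` {r<..} = {3*r<..}" by (auto simp: T1_def)
  moreover have "T2 -` {r<..} = {3*r-2<..}" by (auto simp: T2_def)
  ultimately have e: "measure P {r<..} = measure P {3*r<..}/2 + measure P {3*r-2<..}/2"
    using eqn[of "{r<..}"] by simp
  have "measure P {3*r-2<..} \<le> measure P {r<..}"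
    by (rule finite_measure_mono) (use assms in auto)
  moreover have "measure P {3*r<..} \<le> measure P {r<..}"
    by (rule finite_measure_mono) (use assms in auto)
  ultimately show ?thesis using e by linarith
qed

lemma upper_pow: "measure P {1<..} = measure P {3^k<..}"
proof (induction k)
  case (Suc k)
  have "(1::real) \<le> 3^k" by simp
  then show ?case using Suc upper_eq[of "3^k"] by simp
qed simp

lemma lower_eq: assumes "r \<le> 0" shows "measure P {..<r} = measure P {..<3*r-2}"
proof -
  have "T1 -` {..<r} = {..<3*r}" by (auto simp: T1_def)
  moreover have "T2 -` {..<r} = {..<3*r-2}" by (auto simp: T2_def)
  ultimately have e: "measure P {..<r} = measure P {..<3*r}/2 + measure P {..<3*r-2}/2"
    using eqn[of "{..<r}"] by simp
  have "measure P {..<3*r-2} \<le> measure P {..<r}"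
    by (rule finite_measure_mono) (use assms in auto)
  moreover have "measure P {..<3*r} \<le> measure P {..<r}"
    by (rule finite_measure_mono) (use assms in auto)
  ultimately show ?thesis using e by linarith
qed

lemma lower_pow: "measure P {..<0} = measure P {..<1-3^k}"
proof (induction k)
  case (Suc k)
  have "1 - (3::real)^k \<le> 0" by simp
  then show ?case using Suc lower_eq[of "1-3^k"] by (simp add: algebra_simps)
qed simp

lemma AE_unit: "AE x in P. 0 \<le> x \<and> x \<le> 1"
proof -
  have up: "AE x in P. x \<notin> {1<..(3::real)^k}" for k
  proof -
    have "measure P ({1<..} - {3^k<..}) = measure P {1<..} - measure P {(3::real)^k<..}"
      by (rule measure_Diff) auto
    also have "\<dots> = 0" using upper_pow[of k] by simp
    finally have "measure P ({1<..} - {3^k<..}) = 0" .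
    moreover have "{1<..} - {3^k<..} = {1<..(3::real)^k}" by auto
    ultimately have "measure P {1<..(3::real)^k} = 0" by simp
    then have "emeasure P {1<..(3::real)^k} = 0" by (simp add: emeasure_eq_measure)
    then show ?thesis by (subst AE_iff_measurable[of "{1<..(3::real)^k}"]) auto
  qed
  have lo: "AE x in P. x \<notin> {1-(3::real)^k..<0}" for k
  proof -
    have "measure P ({..<0} - {..<1-3^k}) = measure P {..<0} - measure P {..<1-(3::real)^k}"
      by (rule measure_Diff) auto
    also have "\<dots> = 0" using lower_pow[of k] by simp
    finally have "measure P ({..<0} - {..<1-3^k}) = 0" .
    moreover have "{..<0} - {..<1-3^k} = {1-(3::real)^k..<0}" by auto
    ultimately have "measure P {1-(3::real)^k..<0} = 0" by simp
    then have "emeasure P {1-(3::real)^k..<0} = 0" by (simp add: emeasure_eq_measure)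
    then show ?thesis by (subst AE_iff_measurable[of "{1-(3::real)^k..<0}"]) auto
  qed
  have "AE x in P. \<forall>k. x \<notin> {1<..(3::real)^k} \<and> x \<notin> {1-(3::real)^k..<0}"
    using up lo by (simp add: AE_all_countable AE_conj_iff)
  then show ?thesis
  proof (rule AE_mp, intro AE_I2 impI)
    fix x :: real assume h: "\<forall>k. x \<notin> {1<..(3::real)^k} \<and> x \<notin> {1-(3::real)^k..<0}"
    obtain k where k: "\<bar>x\<bar> + 1 < 3^k" using real_arch_pow[of 3 "\<bar>x\<bar>+1"] by auto
    show "0 \<le> x \<and> x \<le> 1" using h[rule_format, of k] k by auto
  qed
qed

end


context cantor begin

lemma mass_T1: "A \<in> sets borel \<Longrightarrow> measure P (T1 -` A) / 2 \<le> measure P A"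
  using eqn[of A] by simp
lemma mass_T2: "A \<in> sets borel \<Longrightarrow> measure P (T2 -` A) / 2 \<le> measure P A"
  using eqn[of A] by simp

lemma unit_mass: "measure P {0..1} = 1"
proof -
  have "emeasure P (UNIV - {0..1}) = 0"
    using AE_unit by (subst AE_iff_measurable[symmetric, of _ _ "\<lambda>x. 0 \<le> x \<and> x \<le> 1"]) auto
  then have "prob (space P - {0..1}) = 0" by (simp add: emeasure_eq_measure)
  then show ?thesis using prob_compl[of "{0..1}"] by simp
qed

lemma L1: "measure P {1-(1/3)^k..1} \<ge> (1/2)^k"
proof (induction k)
  case 0 then show ?case using unit_mass by simp
next
  case (Suc k)
  have "T2 -` {1-(1/3)^Suc k..1} = {1-(1/3)^k..(1::real)}"
    by (auto simp: T2_def field_simps)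
  then have "measure P {1-(1/3)^k..1} / 2 \<le> measure P {1-(1/3)^Suc k..(1::real)}"
    using mass_T2[of "{1-(1/3)^Suc k..1}"] by simp
  then show ?case using Suc by simp
qed

lemma L2: "measure P {(1/3)^m-(1/3)^(m+k)..(1/3)^m} \<ge> (1/2)^(m+k)"
proof (induction m)
  case 0 then show ?case using L1[of k] by simp
next
  case (Suc m)
  have "T1 -` {(1/3)^Suc m-(1/3)^(Suc m+k)..(1/3)^Suc m} = {(1/3)^m-(1/3)^(m+k)..(1::real)/3^m}"
    by (auto simp: T1_def field_simps)
  then have "measure P {(1/3)^m-(1/3)^(m+k)..(1/3)^m} / 2 \<le> measure P {(1/3)^Suc m-(1/3)^(Suc m+k)..((1::real)/3)^Suc m}"
    using mass_T1[of "{(1/3)^Suc m-(1/3)^(Suc m+k)..(1/3)^Suc m}"] by (simp add: power_divide)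
  then show ?case using Suc by simp
qed

lemma meas_P_iff: "(f \<in> borel_measurable P) = (f \<in> borel_measurable borel)"
  by (simp add: measurable_cong_sets[OF sb refl])

lemma integrable_P:
  fixes f :: "real \<Rightarrow> real"
  assumes "f \<in> borel_measurable borel" "\<And>x. 0 \<le> x \<Longrightarrow> x \<le> 1 \<Longrightarrow> \<bar>f x\<bar> \<le> B"
  shows "integrable P f"
proof (rule integrable_const_bound[where B=B])
  show "AE x in P. norm (f x) \<le> B" using AE_unit by eventually_elim (use assms in auto)
  show "f \<in> borel_measurable P" using assms(1) meas_P_iff[of f] by blast
qed

lemma cont_bound:
  fixes f :: "real \<Rightarrow> real"
  assumes "continuous_on UNIV f"
  shows "\<exists>B. \<forall>x. 0 \<le> x \<longrightarrow> x \<le> 1 \<longrightarrow> \<bar>f x\<bar> \<le> B"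
proof -
  have "compact (f ` {0..1})"
    by (rule compact_continuous_image) (use assms continuous_on_subset in auto)
  then obtain B where "\<forall>y\<in>f ` {0..1}. norm y \<le> B"
    using compact_imp_bounded bounded_iff by metis
  then have "\<forall>x. 0 \<le> x \<longrightarrow> x \<le> 1 \<longrightarrow> \<bar>f x\<bar> \<le> B" by auto
  then show ?thesis by blast
qed

lemma integrable_cont:
  fixes f :: "real \<Rightarrow> real"
  assumes "continuous_on UNIV f"
  shows "integrable P f"
  using cont_bound[OF assms] integrable_P[OF borel_measurable_continuous_onI[OF assms]] by blast

lemma integrable_ind_cont:
  fixes f :: "real \<Rightarrow> real"
  assumes "continuous_on UNIV f" "closed V"
  shows "integrable P (\<lambda>x. indicator V x * f x)"
proof -
  obtain B where B: "\<forall>x. 0 \<le> x \<longrightarrow> x \<le> 1 \<longrightarrow> \<bar>f x\<bar> \<le> B" using cont_bound[OF assms(1)] by blast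
  have "(\<lambda>x. indicator V x * f x) \<in> borel_measurable borel"
    using borel_measurable_continuous_onI[OF assms(1)] borel_closed[OF assms(2)] by measurable
  moreover have "\<bar>indicator V x * f x\<bar> \<le> B" if "0 \<le> x" "x \<le> 1" for x
    using B that by (auto simp: indicator_def)
  ultimately show ?thesis using integrable_P by blast
qed

end


definition dd :: "real \<Rightarrow> real \<times> real \<Rightarrow> real" where
  "dd x b = (x - fst b)^2 + (snd b)^2"

definition FF :: "(real \<times> real) set \<Rightarrow> real \<Rightarrow> real" where
  "FF \<alpha> x = Min (dd x ` \<alpha>)"

definition VV :: "real \<times> real \<Rightarrow> (real \<times> real) set \<Rightarrow> real set" where
  "VV a \<alpha> = {x. \<forall>b\<in>\<alpha>. dd x a \<le> dd x b}"

lemma distortion_FF: "distortion P \<alpha> = integral\<^sup>L P (FF \<alpha>)"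
proof -
  have "(\<lambda>(p, q). (x - p)^2 + q^2) = dd x" for x :: real by (auto simp: dd_def)
  then show ?thesis unfolding distortion_def FF_def[abs_def] by simp
qed

lemma voronoi_VV: "{x. (x, 0) \<in> voronoi a \<alpha>} = VV a \<alpha>"
proof -
  have "dist (x,0) a \<le> dist (x,0) b \<longleftrightarrow> dd x a \<le> dd x b" for x :: real and b
  proof -
    have "dist (x,0) a = sqrt (dd x a)" for a
      by (cases a) (simp add: dist_Pair_Pair dist_real_def dd_def power2_commute)
    then show ?thesis by simp
  qed
  then show ?thesis by (auto simp: voronoi_def VV_def)
qed

lemma cont_dd[continuous_intros]: "continuous_on UNIV (\<lambda>x. dd x b)"
  unfolding dd_def by (intro continuous_intros)

lemma cont_FF: assumes "finite \<alpha>" "\<alpha> \<noteq> {}" shows "continuous_on UNIV (FF \<alpha>)"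
  using assms
proof (induction rule: finite_ne_induct)
  case (singleton x) then show ?case by (simp add: FF_def cont_dd)
next
  case (insert b A)
  have "FF (insert b A) x = min (dd x b) (FF A x)" for x
    unfolding FF_def image_insert by (rule Min_insert) (use insert in simp_all)
  then have "FF (insert b A) = (\<lambda>x. min (dd x b) (FF A x))" by (rule ext)
  then show ?case using insert by (auto intro!: continuous_intros)
qed

lemma closed_VV: "closed (VV a \<alpha>)"
proof -
  have "VV a \<alpha> = (\<Inter>b\<in>\<alpha>. {x. dd x a \<le> dd x b})" by (auto simp: VV_def)
  moreover have "closed {x. dd x a \<le> dd x b}" for b
    by (rule closed_Collect_le) (auto intro: continuous_intros)
  ultimately show ?thesis by auto
qed

lemma FF_le: "finite \<alpha> \<Longrightarrow> b \<in> \<alpha> \<Longrightarrow> FF \<alpha> x \<le> dd x b"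
  by (auto simp: FF_def)

lemma FF_in: "finite \<alpha> \<Longrightarrow> \<alpha> \<noteq> {} \<Longrightarrow> \<exists>b\<in>\<alpha>. FF \<alpha> x = dd x b"
proof -
  assume a: "finite \<alpha>" "\<alpha> \<noteq> {}"
  have "Min (dd x ` \<alpha>) \<in> dd x ` \<alpha>" by (rule Min_in) (use a in simp_all)
  then obtain b where "b \<in> \<alpha>" "Min (dd x ` \<alpha>) = dd x b" by (rule imageE) simp
  then show ?thesis unfolding FF_def by blast
qed

lemma FF_nonneg: "finite \<alpha> \<Longrightarrow> \<alpha> \<noteq> {} \<Longrightarrow> 0 \<le> FF \<alpha> x"
proof -
  assume "finite \<alpha>" "\<alpha> \<noteq> {}"
  then obtain b where "FF \<alpha> x = dd x b" using FF_in[of \<alpha> x] by blast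
  then show ?thesis by (simp add: dd_def)
qed

lemma FF_V: "finite \<alpha> \<Longrightarrow> a \<in> \<alpha> \<Longrightarrow> x \<in> VV a \<alpha> \<Longrightarrow> FF \<alpha> x = dd x a"
proof -
  assume h: "finite \<alpha>" "a \<in> \<alpha>" "x \<in> VV a \<alpha>"
  then obtain b where b: "b \<in> \<alpha>" "FF \<alpha> x = dd x b" using FF_in[of \<alpha> x] by blast
  have "dd x a \<le> dd x b" using h(3) b(1) unfolding VV_def by blast
  then show ?thesis using FF_le[OF h(1,2), of x] b by simp
qed

lemma FF_notV: assumes "finite \<alpha>" "a \<in> \<alpha>" "x \<notin> VV a \<alpha>"
  shows "\<exists>b\<in>\<alpha>. b \<noteq> a \<and> FF \<alpha> x = dd x b"
proof -
  have "\<exists>b\<in>\<alpha>. dd x b < dd x a" using assms(3) unfolding VV_def by (simp add: not_le)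
  then obtain b where b: "b \<in> \<alpha>" "dd x b < dd x a" by blast
  have "\<exists>b0\<in>\<alpha>. FF \<alpha> x = dd x b0" using FF_in[of \<alpha> x] assms by blast
  then obtain b0 where b0: "b0 \<in> \<alpha>" "FF \<alpha> x = dd x b0" by blast
  have "dd x b0 \<le> dd x b" using FF_le[OF assms(1) b(1), of x] b0 by simp
  then have "b0 \<noteq> a" using b b0 by auto
  then show ?thesis using b0 by blast
qed

lemma admissible_FF:
  assumes "admissible n \<alpha>" shows "finite \<alpha>" "\<alpha> \<noteq> {}"
proof -
  have "finite \<alpha>" "1 \<le> card \<alpha>" using assms unfolding admissible_def by blast+
  then show "finite \<alpha>" "\<alpha> \<noteq> {}" by auto
qed

lemma admissible_swap:
  assumes "admissible n \<alpha>" "a \<in> \<alpha>" "a' \<in> S n" "n \<ge> 1"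
  shows "admissible n (insert a' (\<alpha> - {a}))"
proof -
  have f: "finite \<alpha>" and sub: "\<alpha> \<subseteq> (\<Union>j\<in>{1..n}. S j)" and cn: "card \<alpha> \<le> n"
    using assms(1) unfolding admissible_def by blast+
  have "card (insert a' (\<alpha> - {a})) \<le> Suc (card (\<alpha> - {a}))" by (rule card_insert_le_m1) auto
  also have "\<dots> = card \<alpha>" using f assms(2) card_Suc_Diff1 by metis
  finally have c1: "card (insert a' (\<alpha> - {a})) \<le> n" using cn by linarith
  have fi: "finite (insert a' (\<alpha> - {a}))" using f by simp
  then have c2: "1 \<le> card (insert a' (\<alpha> - {a}))" by (simp add: Suc_le_eq card_gt_0_iff)
  have "a' \<in> (\<Union>j\<in>{1..n}. S j)" using assms(3,4) by auto
  then have "insert a' (\<alpha> - {a}) \<subseteq> (\<Union>j\<in>{1..n}. S j)" using sub by blast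
  then show ?thesis unfolding admissible_def using c1 c2 fi by blast
qed

context cantor begin

lemma opt_le:
  assumes "constrained_optimal P n \<alpha>" "admissible n \<beta>"
  shows "integral\<^sup>L P (FF \<alpha>) \<le> integral\<^sup>L P (FF \<beta>)"
proof -
  have "bdd_below {distortion P \<alpha> | \<alpha>. admissible n \<alpha>}"
  proof (rule bdd_belowI[of _ 0])
    fix y assume "y \<in> {distortion P \<alpha> | \<alpha>. admissible n \<alpha>}"
    then obtain \<gamma> where g: "admissible n \<gamma>" "y = distortion P \<gamma>" by blast
    have "\<And>x. 0 \<le> FF \<gamma> x" using FF_nonneg[OF admissible_FF[OF g(1)]] by blast
    then have "0 \<le> integral\<^sup>L P (FF \<gamma>)" by (rule Bochner_Integration.integral_nonneg)
    then show "0 \<le> y" using g(2) by (simp add: distortion_FF)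
  qed
  moreover have "distortion P \<beta> \<in> {distortion P \<alpha> | \<alpha>. admissible n \<alpha>}" using assms(2) by blast
  ultimately have "constrained_error P n \<le> distortion P \<beta>"
    unfolding constrained_error_def by (rule cInf_lower[rotated])
  then show ?thesis using assms(1) by (simp add: constrained_optimal_def distortion_FF)
qed

lemma integrable_FF: assumes "admissible n \<alpha>" shows "integrable P (FF \<alpha>)"
  by (rule integrable_cont[OF cont_FF[OF admissible_FF[OF assms]]])

lemma lemmaA:
  assumes opt: "constrained_optimal P n \<alpha>" and a: "a \<in> \<alpha>" and a': "a' \<in> S n" and n: "n \<ge> 1"
  shows "0 \<le> (\<integral>x. indicator (VV a \<alpha>) x * (dd x a' - dd x a) \<partial>P)"
proof -
  define \<beta> where "\<beta> = insert a' (\<alpha> - {a})"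
  have adm: "admissible n \<alpha>" using opt by (simp add: constrained_optimal_def)
  have f: "finite \<alpha>" "\<alpha> \<noteq> {}" using admissible_FF[OF adm] by auto
  have admb: "admissible n \<beta>" unfolding \<beta>_def by (rule admissible_swap[OF adm a a' n])
  have fb: "finite \<beta>" using f by (simp add: \<beta>_def)
  define V where "V = VV a \<alpha>"
  define G where "G x = FF \<alpha> x + indicator V x * (dd x a' - dd x a)" for x
  have pt: "FF \<beta> x \<le> G x" for x
  proof (cases "x \<in> V")
    case True
    then show ?thesis using FF_V[OF f(1) a, of x] FF_le[OF fb, of a' x]
      by (simp add: G_def V_def \<beta>_def)
  next
    case False
    then obtain b where b: "b \<in> \<alpha>" "b \<noteq> a" "FF \<alpha> x = dd x b"
      using FF_notV[OF f(1) a] V_def by blast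
    then have "b \<in> \<beta>" by (simp add: \<beta>_def)
    then show ?thesis using FF_le[OF fb, of b x] False b by (simp add: G_def)
  qed
  have i1: "integrable P (\<lambda>x. indicator V x * (dd x a' - dd x a))"
    unfolding V_def by (intro integrable_ind_cont closed_VV continuous_intros)
  have i2: "integrable P (FF \<alpha>)" using integrable_FF[OF adm] .
  have "integral\<^sup>L P (FF \<alpha>) \<le> integral\<^sup>L P (FF \<beta>)" by (rule opt_le[OF opt admb])
  also have "\<dots> \<le> integral\<^sup>L P G"
  proof (rule integral_mono[OF integrable_FF[OF admb]])
    show "integrable P G" unfolding G_def[abs_def] by (rule Bochner_Integration.integrable_add[OF i2 i1])
    show "\<And>x. x \<in> space P \<Longrightarrow> FF \<beta> x \<le> G x" using pt by blast
  qed
  also have "\<dots> = integral\<^sup>L P (FF \<alpha>) + (\<integral>x. indicator V x * (dd x a' - dd x a) \<partial>P)"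
    unfolding G_def by (rule Bochner_Integration.integral_add[OF i2 i1])
  finally show ?thesis by (simp add: V_def)
qed

end


lemma id1: "(x-p)^2 + (p+e)^2 = (x+e)^2/2 + 2*(p - (x-e)/2)^2" for x p e :: real
  by (simp add: power2_eq_square field_simps)
lemma id2: "(x - (x-c)/2)^2 + ((x+c)/2)^2 = (x+c)^2/2" for x c :: real
  by (simp add: power2_eq_square field_simps)

definition pr :: "nat \<Rightarrow> real \<Rightarrow> real \<times> real" where
  "pr n x = ((x - 1/real n)/2, (x + 1/real n)/2)"

lemma pr_S: assumes "n \<ge> 1" "0 \<le> x" "x \<le> 1" shows "pr n x \<in> S n"
proof -
  define c where "c = 1 / real n"
  have c: "0 < c" "c \<le> 1" using assms by (auto simp: c_def)
  have "- c \<le> (x - c)/2" "(x - c)/2 \<le> 1" using c assms by auto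
  moreover have "(x + c)/2 = (x - c)/2 + c" by (simp add: field_simps)
  moreover have "- 1 / real n = - c" by (simp add: c_def)
  ultimately show ?thesis unfolding pr_def S_def c_def[symmetric] by simp
qed

lemma S_elem: "b \<in> S j \<Longrightarrow> snd b = fst b + 1/real j \<and> -1/real j \<le> fst b \<and> fst b \<le> 1"
  unfolding S_def by auto

lemma pr_strict:
  assumes n: "n \<ge> 1" and j: "j \<in> {1..n}" and b: "b \<in> S j" and ne: "b \<noteq> pr n x" and x: "0 \<le> x"
  shows "dd x (pr n x) < dd x b"
proof -
  define c where "c = 1 / real n"
  define e where "e = 1 / real j"
  define p where "p = fst b"
  have sb: "snd b = p + e" using S_elem[OF b] unfolding p_def e_def by blast
  have jn: "real j \<le> real n" "1 \<le> real j" using j by auto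
  have ce: "c \<le> e" unfolding c_def e_def using jn by (simp add: frac_le)
  have cpos: "0 < c" using n by (simp add: c_def)
  have d1: "dd x b = (x+e)^2/2 + 2*(p - (x-e)/2)^2"
    unfolding dd_def sb p_def[symmetric] by (rule id1)
  have d2: "dd x (pr n x) = (x+c)^2/2"
    unfolding dd_def pr_def c_def[symmetric] fst_conv snd_conv by (rule id2)
  show ?thesis
  proof (cases "c = e")
    case True
    then have "p \<noteq> (x-c)/2"
    proof (intro notI)
      assume "p = (x-c)/2"
      then have "b = pr n x" using True sb unfolding pr_def c_def[symmetric]
        by (intro prod_eqI) (simp_all add: p_def field_simps)
      then show False using ne by simp
    qed
    then have "0 < (p - (x-e)/2)^2" using True by simp
    moreover have "dd x (pr n x) = (x+e)^2/2" using d2 True by simp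
    ultimately show ?thesis using d1 by linarith
  next
    case False
    then have "c < e" using ce by simp
    then have "(x+c)^2 < (x+e)^2" using x cpos by (intro power_strict_mono) auto
    moreover have "0 \<le> 2*(p - (x-e)/2)^2" by simp
    ultimately show ?thesis using d1 d2 by linarith
  qed
qed

definition mv :: "nat \<Rightarrow> real \<times> real \<Rightarrow> real \<times> real" where
  "mv n b = (max (fst b) (-1/real n), max (fst b) (-1/real n) + 1/real n)"

lemma mv_S: assumes "n \<ge> 1" "b \<in> S j" shows "mv n b \<in> S n"
proof -
  have "fst b \<le> 1" using S_elem[OF assms(2)] by simp
  moreover have "-1/real n \<le> 1" using assms by (simp add: field_simps)
  ultimately show ?thesis unfolding mv_def S_def by auto
qed

lemma mv_strict:
  assumes n: "n \<ge> 1" and j: "j \<in> {1..n}" "j \<noteq> n" and b: "b \<in> S j" and x: "0 \<le> x" "x \<le> 1"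
  shows "dd x (mv n b) < dd x b"
proof -
  define c where "c = 1 / real n"
  define e where "e = 1 / real j"
  define p where "p = fst b"
  have sb: "snd b = p + e" using S_elem[OF b] unfolding p_def e_def by blast
  have jn0: "1 \<le> real j" using j by auto
  have jn: "real j < real n" "1 \<le> real j" using j by auto
  have ce: "c < e" unfolding c_def e_def using jn by (intro divide_strict_left_mono) auto
  have cpos: "0 < c" using n by (simp add: c_def)
  have db: "dd x b = (x - p)^2 + (p+e)^2" by (simp add: dd_def sb p_def)
  show ?thesis
  proof (cases "-c \<le> p")
    case True
    have "- 1 / real n = - c" by (simp add: c_def)
    then have "mv n b = (p, p + c)" using True unfolding mv_def p_def[symmetric] c_def[symmetric] by simp
    then have dm: "dd x (mv n b) = (x - p)^2 + (p+c)^2" by (simp add: dd_def)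
    have "(p+c)^2 < (p+e)^2" using True ce cpos by (intro power_strict_mono) auto
    then show ?thesis using dm db by simp
  next
    case False
    have "- 1 / real n = - c" by (simp add: c_def)
    then have "mv n b = (-c, 0)" using False unfolding mv_def p_def[symmetric] c_def[symmetric] by simp
    then have dm: "dd x (mv n b) = (x + c)^2" by (simp add: dd_def)
    have "-e \<le> p" using S_elem[OF b] unfolding p_def e_def by simp
    have "(x+c)^2 < (x-p)^2" using False x cpos by (intro power_strict_mono) auto
    moreover have "0 \<le> (p+e)^2" by simp
    ultimately show ?thesis using dm db by linarith
  qed
qed



context cantor begin

lemma null_of_AE: assumes "A \<in> sets borel" "AE x in P. x \<notin> A" shows "measure P A = 0"
proof -
  have e: "{x \<in> space P. \<not> (x \<notin> A)} = A" by simp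
  have "emeasure P A = 0"
    using AE_iff_measurable[OF meas_borel[OF assms(1)] e] assms(2) by simp
  then show ?thesis by (simp add: emeasure_eq_measure)
qed

lemma SI:
  fixes h :: "real \<Rightarrow> real" and V :: "real set"
  assumes V: "closed V" and h: "continuous_on UNIV h" and neg: "\<And>x. 0 \<le> x \<Longrightarrow> x \<le> 1 \<Longrightarrow> h x < 0"
    and pos: "measure P V > 0"
  shows "(\<integral>x. indicator V x * h x \<partial>P) < 0"
proof -
  define f where "f x = indicator V x * (- h x)" for x
  have hm: "continuous_on UNIV (\<lambda>x. - h x)" using h by (intro continuous_intros)
  have i: "integrable P f" unfolding f_def[abs_def] by (rule integrable_ind_cont[OF hm V])
  have nn: "AE x in P. 0 \<le> f x"
    using AE_unit
  proof eventually_elim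
    fix x :: real assume "0 \<le> x \<and> x \<le> 1"
    then have "h x < 0" using neg by blast
    then show "0 \<le> f x" unfolding f_def indicator_def by simp
  qed
  have "integral\<^sup>L P f \<noteq> 0"
  proof
    assume "integral\<^sup>L P f = 0"
    then have "AE x in P. f x = 0" using integral_nonneg_eq_0_iff_AE[OF i nn] by simp
    then have "AE x in P. x \<notin> V"
      using AE_unit
    proof eventually_elim
      fix x :: real assume "f x = 0" "0 \<le> x \<and> x \<le> 1"
      then have "h x < 0" using neg by blast
      then show "x \<notin> V" using \<open>f x = 0\<close> unfolding f_def indicator_def by auto
    qed
    then have "measure P V = 0" using null_of_AE[OF borel_closed[OF V]] by simp
    then show False using pos by simp
  qed
  moreover have "0 \<le> integral\<^sup>L P f" by (rule integral_nonneg_AE[OF nn])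
  ultimately have "0 < integral\<^sup>L P f" by simp
  moreover have "(\<integral>x. indicator V x * h x \<partial>P) = - integral\<^sup>L P f"
  proof -
    have "(\<lambda>x. indicator V x * h x) = (\<lambda>x. - f x)" by (rule ext) (simp add: f_def)
    then show ?thesis using Bochner_Integration.integral_minus[of P f] by simp
  qed
  ultimately show ?thesis by simp
qed

lemma POS:
  fixes h :: "real \<Rightarrow> real"
  assumes h: "continuous_on UNIV h" and nn: "\<And>x. 0 \<le> h x" and p0: "0 < h ((1/3)^m)"
  shows "0 < integral\<^sup>L P h"
proof -
  define x0 :: real where "x0 = (1/3)^m"
  have "open {x. (\<lambda>_. 0) x < h x}" by (rule open_Collect_less) (use h in \<open>auto intro: continuous_intros\<close>)
  moreover have "x0 \<in> {x. 0 < h x}" using p0 by (simp add: x0_def)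
  ultimately obtain \<delta> where d: "\<delta> > 0" "ball x0 \<delta> \<subseteq> {x. 0 < h x}" by (auto elim!: openE)
  obtain N where N: "(1/3::real)^N < \<delta>" using real_arch_pow_inv[OF d(1), of "1/3"] by auto
  define I where "I = {x0 - (1/3)^(m+N) .. x0}"
  have "(1/3::real)^(m+N) \<le> (1/3)^N" by (rule power_decreasing) auto
  have IO: "I \<subseteq> {x. 0 < h x}"
  proof
    fix y assume "y \<in> I"
    then have "x0 - (1/3)^(m+N) \<le> y" "y \<le> x0" unfolding I_def by auto
    then have "x0 - y < \<delta>" "0 \<le> x0 - y" using N \<open>(1/3::real)^(m+N) \<le> (1/3)^N\<close> by linarith+
    then have "dist x0 y < \<delta>" by (simp add: dist_real_def)
    then have "y \<in> ball x0 \<delta>" by simp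
    then show "y \<in> {x. 0 < h x}" using d(2) by blast
  qed
  have mI: "measure P I > 0"
  proof -
    have "(1/2::real)^(m+N) \<le> measure P I" using L2[of m N] by (simp add: I_def x0_def)
    moreover have "0 < (1/2::real)^(m+N)" by simp
    ultimately show ?thesis by linarith
  qed
  have i: "integrable P h" by (rule integrable_cont[OF h])
  have "integral\<^sup>L P h \<noteq> 0"
  proof
    assume "integral\<^sup>L P h = 0"
    then have "AE x in P. h x = 0" using integral_nonneg_eq_0_iff_AE[OF i] nn by simp
    then have "AE x in P. x \<notin> I" by eventually_elim (use IO in auto)
    then have "measure P I = 0" using null_of_AE[of I] by (simp add: I_def)
    then show False using mI by simp
  qed
  moreover have "0 \<le> integral\<^sup>L P h" by (rule Bochner_Integration.integral_nonneg) (use nn in auto)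
  ultimately show ?thesis by simp
qed

end


context cantor begin

lemma meas_cont: "continuous_on UNIV f \<Longrightarrow> (f::real\<Rightarrow>real) \<in> borel_measurable P"
  using meas_P_iff[of f] borel_measurable_continuous_onI by blast

lemma lemmaB:
  assumes opt: "constrained_optimal P n \<alpha>" and card: "card \<alpha> = n" and n: "n \<ge> 1" and a: "a \<in> \<alpha>"
  shows "measure P (VV a \<alpha>) > 0"
proof (rule ccontr)
  assume "\<not> ?thesis"
  then have m0: "measure P (VV a \<alpha>) = 0" using measure_nonneg[of P "VV a \<alpha>"] by linarith
  have adm: "admissible n \<alpha>" using opt by (simp add: constrained_optimal_def)
  have fin: "finite \<alpha>" and sub: "\<alpha> \<subseteq> (\<Union>j\<in>{1..n}. S j)" using adm unfolding admissible_def by blast+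
  have Vb: "VV a \<alpha> \<in> sets borel" using borel_closed[OF closed_VV] .
  have e: "{x \<in> space P. \<not> (x \<notin> VV a \<alpha>)} = VV a \<alpha>" by simp
  have "emeasure P (VV a \<alpha>) = 0" using m0 by (simp add: emeasure_eq_measure)
  then have nn: "AE x in P. x \<notin> VV a \<alpha>"
    using AE_iff_measurable[OF meas_borel[OF Vb] e] by simp
  show False
  proof (cases "n = 1")
    case True
    then obtain z where "\<alpha> = {z}" using card card_1_singletonE by metis
    then have "\<alpha> = {a}" using a by simp
    then have "VV a \<alpha> = UNIV" by (simp add: VV_def)
    then have "measure P (VV a \<alpha>) = 1" using prob_space by simp
    then show False using m0 by simp
  next
    case False
    define \<beta> where "\<beta> = \<alpha> - {a}"
    have fb: "finite \<beta>" using fin by (simp add: \<beta>_def)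
    have cb: "card \<beta> = n - 1" using card a fin by (simp add: \<beta>_def)
    have neb: "\<beta> \<noteq> {}" using cb False n fb by (metis card.empty diff_is_0_eq le_antisym)
    have "\<exists>m<n. pr n ((1/3)^m) \<notin> \<beta>"
    proof (rule ccontr)
      assume "\<not> (\<exists>m<n. pr n ((1/3)^m) \<notin> \<beta>)"
      then have s: "(\<lambda>m. pr n ((1/3)^m)) ` {..<n} \<subseteq> \<beta>" by auto
      have inj: "inj_on (\<lambda>m. pr n ((1/3)^m)) {..<n}"
      proof (rule inj_onI)
        fix i k assume "pr n ((1/3)^i) = pr n ((1/3)^k)"
        then have "((1/3::real)^i - 1/real n)/2 = ((1/3)^k - 1/real n)/2" unfolding pr_def by simp
        then have "(1/3::real)^i = (1/3)^k" by simp
        then show "i = k" using power_inject_exp'[of "1/3::real" i k] by simp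
      qed
      have "card {..<n} \<le> card \<beta>" by (rule card_inj_on_le[OF inj s fb])
      then show False using cb n by simp
    qed
    then obtain m where m: "m < n" "pr n ((1/3)^m) \<notin> \<beta>" by blast
    define x0 :: real where "x0 = (1/3)^m"
    have x0: "0 \<le> x0" "x0 \<le> 1" unfolding x0_def by (auto intro: power_le_one)
    define bs where "bs = pr n x0"
    have bsS: "bs \<in> S n" unfolding bs_def by (rule pr_S[OF n x0])
    define \<gamma> where "\<gamma> = insert bs \<beta>"
    have admg: "admissible n \<gamma>" unfolding \<gamma>_def \<beta>_def by (rule admissible_swap[OF adm a bsS n])
    have fg: "finite \<gamma>" using fb by (simp add: \<gamma>_def)
    have le1: "integral\<^sup>L P (FF \<alpha>) \<le> integral\<^sup>L P (FF \<gamma>)" by (rule opt_le[OF opt admg])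
    have gb: "FF \<gamma> x \<le> FF \<beta> x" for x
      unfolding FF_def by (rule Min_antimono) (use neb fg in \<open>auto simp: \<gamma>_def\<close>)
    have ba: "FF \<alpha> x \<le> FF \<beta> x" for x
      unfolding FF_def by (rule Min_antimono) (use neb fin in \<open>auto simp: \<beta>_def\<close>)
    have ca: "continuous_on UNIV (FF \<alpha>)" using cont_FF admissible_FF[OF adm] by blast
    have cb2: "continuous_on UNIV (FF \<beta>)" using cont_FF[OF fb neb] .
    have cg: "continuous_on UNIV (FF \<gamma>)" using cont_FF admissible_FF[OF admg] by blast
    have eq: "integral\<^sup>L P (FF \<alpha>) = integral\<^sup>L P (FF \<beta>)"
    proof (rule integral_cong_AE[OF meas_cont[OF ca] meas_cont[OF cb2]])
      show "AE x in P. FF \<alpha> x = FF \<beta> x"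
        using nn
      proof eventually_elim
        fix x assume "x \<notin> VV a \<alpha>"
        then obtain b where b: "b \<in> \<alpha>" "b \<noteq> a" "FF \<alpha> x = dd x b" using FF_notV[OF fin a] by blast
        then have "b \<in> \<beta>" by (simp add: \<beta>_def)
        then have "FF \<beta> x \<le> FF \<alpha> x" using FF_le[OF fb, of b x] b by simp
        then show "FF \<alpha> x = FF \<beta> x" using ba[of x] by simp
      qed
    qed
    have pos: "0 < FF \<beta> x0 - FF \<gamma> x0"
    proof -
      obtain b0 where b0: "b0 \<in> \<beta>" "FF \<beta> x0 = dd x0 b0" using FF_in[OF fb neb] by blast
      then have "b0 \<in> (\<Union>j\<in>{1..n}. S j)" using sub by (auto simp: \<beta>_def)
      then obtain j where j: "j \<in> {1..n}" "b0 \<in> S j" by blast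
      have "b0 \<noteq> bs" using b0 m(2) by (auto simp: bs_def x0_def)
      then have "dd x0 bs < dd x0 b0" using pr_strict[OF n j, of x0] x0 by (simp add: bs_def)
      moreover have "FF \<gamma> x0 \<le> dd x0 bs" using FF_le[OF fg, of bs x0] by (simp add: \<gamma>_def)
      ultimately show ?thesis using b0 by simp
    qed
    have "0 < integral\<^sup>L P (\<lambda>x. FF \<beta> x - FF \<gamma> x)"
    proof (rule POS[of _ m])
      show "continuous_on UNIV (\<lambda>x. FF \<beta> x - FF \<gamma> x)" using cb2 cg by (intro continuous_intros)
      show "\<And>x. 0 \<le> FF \<beta> x - FF \<gamma> x" using gb by simp
      show "0 < FF \<beta> ((1/3)^m) - FF \<gamma> ((1/3)^m)" using pos by (simp add: x0_def)
    qed
    also have "integral\<^sup>L P (\<lambda>x. FF \<beta> x - FF \<gamma> x) = integral\<^sup>L P (FF \<beta>) - integral\<^sup>L P (FF \<gamma>)"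
      by (rule Bochner_Integration.integral_diff[OF integrable_cont[OF cb2] integrable_cont[OF cg]])
    finally show False using le1 eq by simp
  qed
qed

end


context cantor begin

lemma main_loc:
  assumes n: "n \<ge> 1" and opt: "constrained_optimal P n \<alpha>" and card: "card \<alpha> = n" and a: "a \<in> \<alpha>"
  shows "a = U_inv n (cond_exp P {x. (x, 0) \<in> voronoi a \<alpha>}) \<and> a \<in> S n"
proof -
  have adm: "admissible n \<alpha>" using opt by (simp add: constrained_optimal_def)
  have fin: "finite \<alpha>" and sub: "\<alpha> \<subseteq> (\<Union>j\<in>{1..n}. S j)" using adm unfolding admissible_def by blast+
  define V where "V = VV a \<alpha>"
  have cV: "closed V" unfolding V_def by (rule closed_VV)
  have mpos: "measure P V > 0" unfolding V_def by (rule lemmaB[OF opt card n a])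
  obtain j where j: "j \<in> {1..n}" "a \<in> S j" using sub a by blast
  have aS: "a \<in> S n"
  proof (rule ccontr)
    assume "a \<notin> S n"
    then have jn: "j \<noteq> n" using j by auto
    have "0 \<le> (\<integral>x. indicator V x * (dd x (mv n a) - dd x a) \<partial>P)"
      unfolding V_def by (rule lemmaA[OF opt a mv_S[OF n j(2)] n])
    moreover have "(\<integral>x. indicator V x * (dd x (mv n a) - dd x a) \<partial>P) < 0"
    proof (rule SI[OF cV _ _ mpos])
      show "continuous_on UNIV (\<lambda>x. dd x (mv n a) - dd x a)" by (intro continuous_intros)
      show "\<And>x. 0 \<le> x \<Longrightarrow> x \<le> 1 \<Longrightarrow> dd x (mv n a) - dd x a < 0"
        using mv_strict[OF n j(1) jn j(2)] by simp
    qed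
    ultimately show False by simp
  qed
  define c where "c = 1 / real n"
  have c: "0 < c" "c \<le> 1" using n by (auto simp: c_def)
  define p where "p = fst a"
  have ap: "a = (p, p + c)" using S_elem[OF aS] unfolding p_def c_def by (metis prod.collapse)
  define I1 where "I1 = (\<integral>x. indicator V x * x \<partial>P)"
  define m where "m = measure P V"
  have i1: "integrable P (\<lambda>x. indicator V x * x)"
    by (rule integrable_ind_cont[OF _ cV]) (intro continuous_intros)
  have i0: "integrable P (\<lambda>x. indicator V x * (1::real))"
    using integrable_ind_cont[OF continuous_on_const[of UNIV "1::real"] cV] .
  have m_int: "(\<integral>x. indicator V x * (1::real) \<partial>P) = m" by (simp add: m_def)
  have I1nn: "0 \<le> I1" unfolding I1_def
    by (rule integral_nonneg_AE) (use AE_unit in \<open>eventually_elim, simp add: indicator_def\<close>)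
  have I1m: "I1 \<le> m" unfolding I1_def m_int[symmetric]
    by (rule integral_mono_AE[OF i1 i0]) (use AE_unit in \<open>eventually_elim, simp add: indicator_def\<close>)
  define E where "E = I1 / m"
  have E: "0 \<le> E" "E \<le> 1" "I1 = m * E" using I1nn I1m mpos by (auto simp: E_def m_def field_simps)
  define t where "t = (E - c) / 2"
  have tS: "(t, t + c) \<in> S n"
  proof -
    have "- c \<le> t" "t \<le> 1" using E c by (auto simp: t_def)
    moreover have "- 1 / real n = - c" by (simp add: c_def)
    ultimately show ?thesis unfolding S_def c_def[symmetric] by simp
  qed
  have A: "0 \<le> (\<integral>x. indicator V x * (dd x (t, t + c) - dd x a) \<partial>P)"
    unfolding V_def by (rule lemmaA[OF opt a tS n])
  have pw: "indicator V x * (dd x (t, t + c) - dd x a)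
      = (2*(p-t)) * (indicator V x * x) + (2*(t-p)*(t+p+c)) * (indicator V x * (1::real))" for x
    unfolding ap dd_def by (simp add: power2_eq_square algebra_simps)
  have "(\<integral>x. indicator V x * (dd x (t, t + c) - dd x a) \<partial>P)
      = (2*(p-t)) * I1 + (2*(t-p)*(t+p+c)) * m"
    unfolding pw I1_def m_int[symmetric]
    using i1 i0 by simp
  with A have "0 \<le> (2*(p-t)) * I1 + (2*(t-p)*(t+p+c)) * m" by simp
  moreover have "I1 = m * (2*t + c)" using E unfolding t_def by (simp add: field_simps)
  ultimately have "0 \<le> - 2 * m * (t - p)^2" by (simp add: power2_eq_square algebra_simps)
  then have "(t - p)^2 \<le> 0" using mpos m_def by (simp add: mult_le_0_iff zero_le_mult_iff)
  then have tp: "t = p" by simp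
  have ce: "cond_exp P {x. (x, 0) \<in> voronoi a \<alpha>} = E"
    unfolding cond_exp_def voronoi_VV V_def[symmetric] set_lebesgue_integral_def E_def I1_def m_def
    by simp
  have "U_inv n E = (t, t + c)" unfolding U_inv_def c_def[symmetric] t_def by simp
  then show ?thesis using ce ap tp aS by simp
qed

end

theorem mainTheorem1:
  fixes P :: "real measure" and n :: nat and \<alpha> :: "(real \<times> real) set"
  assumes "is_cantor_dist P"
    and "n \<ge> 1"
    and "constrained_optimal P n \<alpha>"
    and "card \<alpha> = n"
  shows "\<forall>a\<in>\<alpha>. a = U_inv n (cond_exp P {x. (x, 0) \<in> voronoi a \<alpha>}) \<and> a \<in> S n"
proof -
  have ps: "prob_space P" and sb: "sets P = sets borel"
    and eq: "\<forall>A \<in> sets borel. measure P A = measure P (T1 -` A) / 2 + measure P (T2 -` A) / 2"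
    using assms(1) unfolding is_cantor_dist_def by blast+
  interpret cantor P
    by (rule cantor.intro[OF ps]) (rule cantor_axioms.intro[OF sb], use eq in blast)
  show ?thesis using main_loc[OF assms(2,3,4)] by blast
qed

end
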